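(* It holds that \[ \mathscr{A}(\mathbb{R}^3\otimes\mathbb{R}^3\otimes\mathbb{R}^3)=\mathscr{A}(\mathrm{Sym}^3(\mathbb{R}^3))=\frac{1}{\sqrt{\max_{A\in\mathbb{R}^3\otimes\mathbb{R}^3\otimes\mathbb{R}^3}\operatorname{rk}_\perp(A)}}=\frac{1}{\sqrt7}. \] Moreover, the symmetric tensor associated with the Chebyshev cubic $\mathrm{Ch}_{3,3}(x)=x_1^3-3x_1(x_2^2+x_3^2)$ is extremal, both in $\mathbb{R}^3\otimes\mathbb{R}^3\otimes\mathbb{R}^3$ and in $\mathrm{Sym}^3(\mathbb{R}^3)$.
   Context: Tensors and their norms: \begin{itemize} \item The Frobenius inner product on real $(n_1,\dots,n_d)$-tensors is $\langle A,A'\rangle_F=\sum a_{i_1\dots i_d}a'_{i_1\dots i_d}$, with norm $\|A\|_F$. \item A rank-one tensor is a nonzero $x^{(1)}\otimes\cdots\otimes x^{(d)}$. \item The spectral norm is $\|A\|_2=\max_{\|x^{(j)}\|=1}\langle A,x^{(1)}\otimes\cdots\otimes x^{(d)}\rangle_F$. \end{itemize} Best rank-one approximation ratio: \begin{itemize} \item For a linear subspace $V$ of the tensor space (either the full tensor space or the space $\mathrm{Sym}^d(\mathbb{R}^n)$ of symmetric $n^d$-tensors), $\mathscr{A}(V)=\min_{0\neq A\in V}\|A\|_2/\|A\|_F$. \item A nonzero $A\in V$ is called extremal (in $V$) if $\|A\|_2/\|A\|_F=\mathscr{A}(V)$. \end{itemize} Orthogonal rank: $\operatorname{rk}_\perp(A)$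 is the smallest $r$ with $A=Y_1+\dots+Y_r$, where the $Y_\ell$ are rank-one tensors that are pairwise orthogonal in $\langle\cdot,\cdot\rangle_F$. The symmetric tensor $A$ associated with a form $p\in P_{d,n}$ is the unique symmetric tensor with $p(x)=\langle A,x\otimes\cdots\otimes x\rangle_F$. *)

theory Defs
  imports "HOL-Analysis.Analysis"
begin

type_synonym tensor3 = "3 \<Rightarrow> 3 \<Rightarrow> 3 \<Rightarrow> real"

definition frob_inner :: "tensor3 \<Rightarrow> tensor3 \<Rightarrow> real" where
  "frob_inner A B = (\<Sum>i\<in>UNIV. \<Sum>j\<in>UNIV. \<Sum>k\<in>UNIV. A i j k * B i j k)"

definition frob_norm :: "tensor3 \<Rightarrow> real" where
  "frob_norm A = sqrt (frob_inner A A)"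

definition outer3 :: "real^3 \<Rightarrow> real^3 \<Rightarrow> real^3 \<Rightarrow> tensor3" where
  "outer3 x y z = (\<lambda>i j k. x$i * y$j * z$k)"

definition rank_one :: "tensor3 \<Rightarrow> bool" where
  "rank_one A \<longleftrightarrow> (\<exists>x y z. A = outer3 x y z \<and> A \<noteq> (\<lambda>i j k. 0))"

text \<open>Spectral norm: max over unit vectors (written as a supremum; the maximum is attained).\<close>
definition spec_norm :: "tensor3 \<Rightarrow> real" where
  "spec_norm A = Sup {frob_inner A (outer3 x y z) | x y z. norm x = 1 \<and> norm y = 1 \<and> norm z = 1}"

definition sym_tensors :: "tensor3 set" where
  "sym_tensors = {A. \<forall>i j k. A i j k = A j i k \<and> A i j k = A i k j}"

definition approx_ratio :: "tensor3 set \<Rightarrow> real" where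
  "approx_ratio V = Inf {spec_norm A / frob_norm A | A. A \<in> V \<and> A \<noteq> (\<lambda>i j k. 0)}"

definition extremal_in :: "tensor3 set \<Rightarrow> tensor3 \<Rightarrow> bool" where
  "extremal_in V A \<longleftrightarrow> A \<in> V \<and> A \<noteq> (\<lambda>i j k. 0) \<and> spec_norm A / frob_norm A = approx_ratio V"

definition orth_rank :: "tensor3 \<Rightarrow> nat" where
  "orth_rank A = (LEAST r. \<exists>Y :: nat \<Rightarrow> tensor3.
      (\<forall>l<r. rank_one (Y l)) \<and> (\<forall>l<r. \<forall>m<r. l \<noteq> m \<longrightarrow> frob_inner (Y l) (Y m) = 0)
      \<and> A = (\<lambda>i j k. \<Sum>l<r. Y l i j k))"

definition assoc_sym_tensor :: "(real^3 \<Rightarrow> real) \<Rightarrow> tensor3" where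
  "assoc_sym_tensor p = (THE A. A \<in> sym_tensors \<and> (\<forall>x. p x = frob_inner A (outer3 x x x)))"

definition chebyshev33 :: "real^3 \<Rightarrow> real" where
  "chebyshev33 x = (x$1)^3 - 3 * x$1 * ((x$2)^2 + (x$3)^2)"

end

theory Submission
  imports Defs
begin


lemma frob_outer: "frob_inner (outer3 x y z) (outer3 x' y' z') = (x \<bullet> x') * (y \<bullet> y') * (z \<bullet> z')"
  unfolding frob_inner_def outer3_def inner_vec_def
  by (simp add: sum_3 algebra_simps)

lemma frob_sum_left:
  "frob_inner (\<lambda>i j k. \<Sum>m\<in>I. Y m i j k) B = (\<Sum>m\<in>I. frob_inner (Y m) B)"
  unfolding frob_inner_def
  by (simp add: sum_distrib_right sum.swap[where A=I])

lemma frob_comm: "frob_inner A B = frob_inner B A"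
  unfolding frob_inner_def by (simp add: mult.commute)

lemma frob_prod: "frob_inner A B = (\<Sum>p\<in>UNIV. A (fst p) (fst (snd p)) (snd (snd p)) * B (fst p) (fst (snd p)) (snd (snd p)))"
  unfolding frob_inner_def
  by (simp add: sum.cartesian_product' UNIV_Times_UNIV[symmetric] del: UNIV_Times_UNIV)

lemma frob_self_nonneg: "0 \<le> frob_inner A A"
  unfolding frob_inner_def by (intro sum_nonneg) auto

lemma frob_CS: "frob_inner A B \<le> frob_norm A * frob_norm B"
proof -
  have "(frob_inner A B)^2 \<le> frob_inner A A * frob_inner B B"
    unfolding frob_prod using Cauchy_Schwarz_ineq_sum by (simp add: power2_eq_square)
  then have "\<bar>frob_inner A B\<bar> \<le> sqrt (frob_inner A A * frob_inner B B)"
    using real_le_rsqrt by (metis abs_le_square_iff abs_of_nonneg real_sqrt_abs real_sqrt_le_mono)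
  then show ?thesis unfolding frob_norm_def by (simp add: real_sqrt_mult)
qed


lemma frob_outer_self: "frob_inner (outer3 x y z) (outer3 x y z) = (norm x * norm y * norm z)^2"
  by (simp add: frob_outer power_mult_distrib dot_square_norm)

lemma frob_norm_outer: "frob_norm (outer3 x y z) = norm x * norm y * norm z"
  unfolding frob_norm_def frob_outer_self by simp

definition specset :: "tensor3 \<Rightarrow> real set" where
  "specset A = {frob_inner A (outer3 x y z) | x y z. norm x = 1 \<and> norm y = 1 \<and> norm z = 1}"

lemma axis_norm1: "norm (axis (1::3) (1::real)) = 1" by simp

lemma specset_ne: "specset A \<noteq> {}"
  unfolding specset_def using axis_norm1 by blast

lemma specset_bdd: "bdd_above (specset A)"
proof -
  have "v \<le> frob_norm A" if vin: "v \<in> specset A" for v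
  proof -
    obtain x y z where "v = frob_inner A (outer3 x y z)" "norm x = 1" "norm y = 1" "norm z = 1"
      using vin unfolding specset_def by blast
    then show ?thesis using frob_CS[of A "outer3 x y z"] frob_norm_outer[of x y z] by simp
  qed
  then show ?thesis by (auto simp: bdd_above_def)
qed

lemma spec_ge: "norm x = 1 \<Longrightarrow> norm y = 1 \<Longrightarrow> norm z = 1 \<Longrightarrow> frob_inner A (outer3 x y z) \<le> spec_norm A"
  unfolding spec_norm_def specset_def[symmetric]
  by (rule cSup_upper[OF _ specset_bdd]) (auto simp: specset_def)

lemma spec_le: "(\<And>x y z. norm x = 1 \<Longrightarrow> norm y = 1 \<Longrightarrow> norm z = 1 \<Longrightarrow> frob_inner A (outer3 x y z) \<le> c) \<Longrightarrow> spec_norm A \<le> c"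
  unfolding spec_norm_def specset_def[symmetric]
  by (rule cSup_least[OF specset_ne]) (auto simp: specset_def)

lemma outer3_scale: "outer3 (a *\<^sub>R x) (b *\<^sub>R y) (c *\<^sub>R z) = (\<lambda>i j k. (a*b*c) * outer3 x y z i j k)"
  by (simp add: outer3_def fun_eq_iff)

lemma frob_scale_right: "frob_inner A (\<lambda>i j k. c * B i j k) = c * frob_inner A B"
  unfolding frob_inner_def by (simp add: sum_distrib_left algebra_simps)

lemma outer3_nz: "outer3 x y z \<noteq> (\<lambda>i j k. 0) \<Longrightarrow> x \<noteq> 0 \<and> y \<noteq> 0 \<and> z \<noteq> 0"
  by (auto simp: outer3_def fun_eq_iff)

lemma spec_ge_rank1:
  assumes "Y = outer3 x y z" "Y \<noteq> (\<lambda>i j k. 0)"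
  shows "frob_inner A Y \<le> spec_norm A * frob_norm Y"
proof -
  from outer3_nz assms have nz: "x \<noteq> 0" "y \<noteq> 0" "z \<noteq> 0" by auto
  let ?c = "1 / (norm x * norm y * norm z)"
  have "frob_inner A (outer3 (x /\<^sub>R norm x) (y /\<^sub>R norm y) (z /\<^sub>R norm z)) \<le> spec_norm A"
    using nz by (intro spec_ge) auto
  also have "frob_inner A (outer3 (x /\<^sub>R norm x) (y /\<^sub>R norm y) (z /\<^sub>R norm z)) = ?c * frob_inner A Y"
    unfolding outer3_scale frob_scale_right assms by (simp add: divide_inverse mult.commute)
  finally have "?c * frob_inner A Y \<le> spec_norm A" .
  moreover have pos: "norm x * norm y * norm z > 0" using nz by auto
  ultimately have "frob_inner A Y \<le> spec_norm A * (norm x * norm y * norm z)"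
    by (simp add: field_simps)
  then show ?thesis using assms frob_norm_outer by simp
qed

definition decomp :: "tensor3 \<Rightarrow> nat \<Rightarrow> (nat \<Rightarrow> tensor3) \<Rightarrow> bool" where
  "decomp A r Y \<longleftrightarrow> (\<forall>l<r. rank_one (Y l)) \<and> (\<forall>l<r. \<forall>m<r. l \<noteq> m \<longrightarrow> frob_inner (Y l) (Y m) = 0)
      \<and> A = (\<lambda>i j k. \<Sum>l<r. Y l i j k)"

lemma orth_rank_alt: "orth_rank A = (LEAST r. \<exists>Y. decomp A r Y)"
  unfolding orth_rank_def decomp_def ..

lemma decomp_bound:
  assumes "decomp A r Y"
  shows "frob_norm A \<le> sqrt (real r) * spec_norm A"
proof (cases "r = 0")
  case True
  then have "A = (\<lambda>i j k. 0)" using assms by (simp add: decomp_def)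
  then show ?thesis using True by (simp add: frob_norm_def frob_inner_def)
next
  case False
  define n where "n l = frob_inner (Y l) (Y l)" for l
  have AY: "A = (\<lambda>i j k. \<Sum>l<r. Y l i j k)" using assms by (simp add: decomp_def)
  have AYl: "frob_inner A (Y l) = n l" if "l < r" for l
  proof -
    have "frob_inner A (Y l) = (\<Sum>m<r. frob_inner (Y m) (Y l))" unfolding AY frob_sum_left ..
    also have "\<dots> = (\<Sum>m\<in>{l}. frob_inner (Y m) (Y l))"
      using assms that by (intro sum.mono_neutral_right) (auto simp: decomp_def)
    finally show ?thesis by (simp add: n_def)
  qed
  have AA: "frob_inner A A = (\<Sum>l<r. n l)"
  proof -
    have "frob_inner A A = frob_inner A (\<lambda>i j k. \<Sum>l<r. Y l i j k)" using AY by simp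
    also have "\<dots> = (\<Sum>l<r. frob_inner A (Y l))"
      by (subst frob_comm) (simp add: frob_sum_left frob_comm)
    finally show ?thesis using AYl by simp
  qed
  obtain l where l: "l < r" "\<forall>m<r. n m \<le> n l"
  proof -
    have "finite (n ` {..<r})" "n ` {..<r} \<noteq> {}" using False by auto
    then have "Max (n ` {..<r}) \<in> n ` {..<r}" by (rule Max_in)
    then obtain l where "l < r" "n l = Max (n ` {..<r})" by auto
    moreover have "\<forall>m<r. n m \<le> Max (n ` {..<r})" by auto
    ultimately show ?thesis using that by metis
  qed
  have sumle: "(\<Sum>l<r. n l) \<le> real r * n l"
    using sum_bounded_above[of "{..<r}" n "n l"] l by auto
  have rk: "rank_one (Y l)" using assms l by (auto simp: decomp_def)
  then obtain x y z where Yl: "Y l = outer3 x y z" "Y l \<noteq> (\<lambda>i j k. 0)" unfolding rank_one_def by auto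
  have "n l \<le> spec_norm A * frob_norm (Y l)"
    using spec_ge_rank1[OF Yl, of A] AYl[OF l(1)] by simp
  moreover have fY: "frob_norm (Y l) = sqrt (n l)" by (simp add: frob_norm_def n_def)
  moreover have nl0: "0 \<le> n l" by (simp add: n_def frob_self_nonneg)
  ultimately have "sqrt (n l) * sqrt (n l) \<le> spec_norm A * sqrt (n l)" by simp
  then have s: "sqrt (n l) \<le> spec_norm A"
  proof -
    have "x \<noteq> 0" "y \<noteq> 0" "z \<noteq> 0" using outer3_nz Yl by auto
    then have "n l > 0" unfolding n_def Yl(1) frob_outer_self by simp
    then have "sqrt (n l) > 0" by simp
    then show ?thesis using \<open>sqrt (n l) * sqrt (n l) \<le> spec_norm A * sqrt (n l)\<close>
      using mult_right_le_imp_le by blast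
  qed
  have "frob_norm A = sqrt (\<Sum>l<r. n l)" by (simp add: frob_norm_def AA)
  also have "\<dots> \<le> sqrt (real r * n l)" using sumle by simp
  also have "\<dots> = sqrt (real r) * sqrt (n l)" by (simp add: real_sqrt_mult)
  also have "\<dots> \<le> sqrt (real r) * spec_norm A" using s by (simp add: mult_left_mono)
  finally show ?thesis .
qed


lemma decomp_from_family:
  fixes T :: "'i \<Rightarrow> tensor3"
  assumes fin: "finite I" and out: "\<forall>p\<in>I. \<exists>x y z. T p = outer3 x y z"
    and orth: "\<forall>p\<in>I. \<forall>q\<in>I. p \<noteq> q \<longrightarrow> frob_inner (T p) (T q) = 0"
    and sum: "A = (\<lambda>i j k. \<Sum>p\<in>I. T p i j k)"
  shows "\<exists>Y. decomp A (card {p\<in>I. T p \<noteq> (\<lambda>i j k. 0)}) Y"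
proof -
  define J where "J = {p\<in>I. T p \<noteq> (\<lambda>i j k. 0)}"
  have fJ: "finite J" using fin by (simp add: J_def)
  obtain h where h: "bij_betw h {0..<card J} J" using ex_bij_betw_nat_finite[OF fJ] by blast
  have hJ: "h l \<in> J" if "l < card J" for l using h that by (auto dest: bij_betwE)
  have "decomp A (card J) (\<lambda>l. T (h l))"
    unfolding decomp_def
  proof (intro conjI allI impI)
    fix l assume "l < card J"
    then have "h l \<in> J" by (rule hJ)
    then show "rank_one (T (h l))" using out unfolding rank_one_def J_def by auto
  next
    fix l m assume lm: "l < card J" "m < card J" "l \<noteq> m"
    then have "h l \<noteq> h m" using h unfolding bij_betw_def inj_on_def by auto
    then show "frob_inner (T (h l)) (T (h m)) = 0" using orth hJ lm J_def by auto
  next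
    have "(\<lambda>i j k. \<Sum>l<card J. T (h l) i j k) = (\<lambda>i j k. \<Sum>p\<in>J. T p i j k)"
    proof (intro ext)
      fix i j k
      show "(\<Sum>l<card J. T (h l) i j k) = (\<Sum>p\<in>J. T p i j k)"
        using sum.reindex_bij_betw[OF h, of "\<lambda>p. T p i j k"] by (simp add: atLeast0LessThan)
    qed
    also have "\<dots> = A"
    proof (unfold sum, intro ext)
      fix i j k
      show "(\<Sum>p\<in>J. T p i j k) = (\<Sum>p\<in>I. T p i j k)"
        using fin by (intro sum.mono_neutral_left) (auto simp: J_def)
    qed
    finally show "A = (\<lambda>i j k. \<Sum>l<card J. T (h l) i j k)" ..
  qed
  then show ?thesis unfolding J_def by blast
qed

lemma orth_rank_le: "decomp A r Y \<Longrightarrow> orth_rank A \<le> r"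
  unfolding orth_rank_alt by (rule Least_le) blast

lemma orth_rank_decomp: "decomp A r Y \<Longrightarrow> \<exists>Y. decomp A (orth_rank A) Y"
  unfolding orth_rank_alt by (rule LeastI_ex) blast



definition chT :: tensor3 where
  "chT i j k = (if i=1 \<and> j=1 \<and> k=1 then 1 else
     if (i=1 \<and> j=k \<and> j\<noteq>1) \<or> (j=1 \<and> i=k \<and> i\<noteq>1) \<or> (k=1 \<and> i=j \<and> i\<noteq>1) then -1 else 0)"

lemma chT_sym: "chT \<in> sym_tensors"
  unfolding sym_tensors_def chT_def by (simp add: forall_3)

lemma chT_eval: "frob_inner chT (outer3 x y z) =
   x$1*y$1*z$1 - x$1*y$2*z$2 - x$2*y$1*z$2 - x$2*y$2*z$1 - x$1*y$3*z$3 - x$3*y$1*z$3 - x$3*y$3*z$1"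
  unfolding frob_inner_def outer3_def chT_def by (simp add: sum_3)

lemma chT_frob: "frob_inner chT chT = 7"
  unfolding frob_inner_def chT_def by (simp add: sum_3)

lemma chT_nz: "chT \<noteq> (\<lambda>i j k. 0)"
  by (metis chT_def one_neq_zero)

lemma ch_poly: "chebyshev33 x = frob_inner chT (outer3 x x x)"
  unfolding chT_eval chebyshev33_def by (simp add: algebra_simps power2_eq_square power3_eq_cube)

lemma ch_unique:
  assumes "A \<in> sym_tensors" "\<forall>x. chebyshev33 x = frob_inner A (outer3 x x x)"
  shows "A = chT"
proof -
  have s1: "\<And>i j k. A i j k = A j i k" and s2: "\<And>i j k. A i j k = A i k j"
    using assms(1) unfolding sym_tensors_def by auto
  have canon: "A 1 2 1 = A 1 1 2" "A 1 3 1 = A 1 1 3" "A 1 3 2 = A 1 2 3" "A 2 1 1 = A 1 1 2" "A 2 1 2 = A 1 2 2" "A 2 1 3 = A 1 2 3" "A 2 2 1 = A 1 2 2" "A 2 3 1 = A 1 2 3" "A 2 3 2 = A 2 2 3" "A 3 1 1 = A 1 1 3" "A 3 1 2 = A 1 2 3" "A 3 1 3 = A 1 3 3" "A 3 2 1 = A 1 2 3" "A 3 2 2 = A 2 2 3" "A 3 2 3 = A 2 3 3" "A 3 3 1 = A 1 3 3" "A 3 3 2 = A 2 3 3"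
    by (metis s1 s2)+
  have "chebyshev33 (vector [1,0,0]) = frob_inner A (outer3 (vector [1,0,0]) (vector [1,0,0]) (vector [1,0,0]))" using assms(2) by blast
  note ev0 = this[unfolded chebyshev33_def frob_inner_def outer3_def sum_3 vector_3 canon]
  have "chebyshev33 (vector [0,1,0]) = frob_inner A (outer3 (vector [0,1,0]) (vector [0,1,0]) (vector [0,1,0]))" using assms(2) by blast
  note ev1 = this[unfolded chebyshev33_def frob_inner_def outer3_def sum_3 vector_3 canon]
  have "chebyshev33 (vector [0,0,1]) = frob_inner A (outer3 (vector [0,0,1]) (vector [0,0,1]) (vector [0,0,1]))" using assms(2) by blast
  note ev2 = this[unfolded chebyshev33_def frob_inner_def outer3_def sum_3 vector_3 canon]
  have "chebyshev33 (vector [1,1,0]) = frob_inner A (outer3 (vector [1,1,0]) (vector [1,1,0]) (vector [1,1,0]))" using assms(2) by blast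
  note ev3 = this[unfolded chebyshev33_def frob_inner_def outer3_def sum_3 vector_3 canon]
  have "chebyshev33 (vector [1,-1,0]) = frob_inner A (outer3 (vector [1,-1,0]) (vector [1,-1,0]) (vector [1,-1,0]))" using assms(2) by blast
  note ev4 = this[unfolded chebyshev33_def frob_inner_def outer3_def sum_3 vector_3 canon]
  have "chebyshev33 (vector [1,0,1]) = frob_inner A (outer3 (vector [1,0,1]) (vector [1,0,1]) (vector [1,0,1]))" using assms(2) by blast
  note ev5 = this[unfolded chebyshev33_def frob_inner_def outer3_def sum_3 vector_3 canon]
  have "chebyshev33 (vector [1,0,-1]) = frob_inner A (outer3 (vector [1,0,-1]) (vector [1,0,-1]) (vector [1,0,-1]))" using assms(2) by blast
  note ev6 = this[unfolded chebyshev33_def frob_inner_def outer3_def sum_3 vector_3 canon]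
  have "chebyshev33 (vector [0,1,1]) = frob_inner A (outer3 (vector [0,1,1]) (vector [0,1,1]) (vector [0,1,1]))" using assms(2) by blast
  note ev7 = this[unfolded chebyshev33_def frob_inner_def outer3_def sum_3 vector_3 canon]
  have "chebyshev33 (vector [0,1,-1]) = frob_inner A (outer3 (vector [0,1,-1]) (vector [0,1,-1]) (vector [0,1,-1]))" using assms(2) by blast
  note ev8 = this[unfolded chebyshev33_def frob_inner_def outer3_def sum_3 vector_3 canon]
  have "chebyshev33 (vector [1,1,1]) = frob_inner A (outer3 (vector [1,1,1]) (vector [1,1,1]) (vector [1,1,1]))" using assms(2) by blast
  note ev9 = this[unfolded chebyshev33_def frob_inner_def outer3_def sum_3 vector_3 canon]
  have vals: "A 1 1 1 = 1" "A 2 2 2 = 0" "A 3 3 3 = 0" "A 1 1 2 = 0" "A 1 1 3 = 0" "A 1 2 2 = -1"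
     "A 1 3 3 = -1" "A 2 2 3 = 0" "A 2 3 3 = 0" "A 1 2 3 = 0"
    using ev0 ev1 ev2 ev3 ev4 ev5 ev6 ev7 ev8 ev9 by simp_all
  show ?thesis
  proof (intro ext)
    fix i j k :: 3
    show "A i j k = chT i j k"
      using exhaust_3[of i] exhaust_3[of j] exhaust_3[of k]
      by (elim disjE) (simp_all add: chT_def canon vals)
  qed
qed

lemma chT_assoc: "assoc_sym_tensor chebyshev33 = chT"
  unfolding assoc_sym_tensor_def
  using chT_sym ch_poly ch_unique by (intro the_equality) auto

lemma ch_ineq_poly:
  fixes x1 x2 x3 y1 y2 y3 z1 z2 z3 :: real
  defines "T \<equiv> x1*y1*z1 - x1*y2*z2 - x2*y1*z2 - x2*y2*z1 - x1*y3*z3 - x3*y1*z3 - x3*y3*z1"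
  shows "T^2 \<le> (x1^2+x2^2+x3^2)*(y1^2+y2^2+y3^2)*(z1^2+z2^2+z3^2)"
proof -
  define v1 where "v1 = x1*y1 - x2*y2 - x3*y3"
  define v2 where "v2 = -(x1*y2 + x2*y1)"
  define v3 where "v3 = -(x1*y3 + x3*y1)"
  have "(x1^2+x2^2+x3^2)*(y1^2+y2^2+y3^2)*(z1^2+z2^2+z3^2) - T^2 =
     (x2*y3-x3*y2)^2*(z1^2+z2^2+z3^2) + (v1*z2-v2*z1)^2 + (v1*z3-v3*z1)^2 + (v2*z3-v3*z2)^2"
    unfolding T_def v1_def v2_def v3_def by algebra
  moreover have "0 \<le> (x2*y3-x3*y2)^2*(z1^2+z2^2+z3^2) + (v1*z2-v2*z1)^2 + (v1*z3-v3*z1)^2 + (v2*z3-v3*z2)^2"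
    by (intro add_nonneg_nonneg mult_nonneg_nonneg) auto
  ultimately show ?thesis by linarith
qed

lemma norm1_comp: "norm (x::real^3) = 1 \<Longrightarrow> (x$1)^2 + (x$2)^2 + (x$3)^2 = 1"
  by (simp add: norm_eq_1 inner_vec_def sum_3 power2_eq_square)

lemma chT_spec: "spec_norm chT = 1"
proof (rule antisym)
  show "spec_norm chT \<le> 1"
  proof (rule spec_le)
    fix x y z :: "real^3" assume n: "norm x = 1" "norm y = 1" "norm z = 1"
    have "(frob_inner chT (outer3 x y z))^2 \<le> 1"
      using ch_ineq_poly[of "x$1" "y$1" "z$1" "y$2" "z$2" "x$2" "y$3" "z$3" "x$3"]
      unfolding chT_eval norm1_comp[OF n(1)] norm1_comp[OF n(2)] norm1_comp[OF n(3)] by simp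
    then show "frob_inner chT (outer3 x y z) \<le> 1"
      by (metis abs_le_square_iff abs_of_nonneg one_power2 le_cases order_trans zero_le_one abs_ge_self)
  qed
next
  have "frob_inner chT (outer3 (axis 1 1) (axis 1 1) (axis 1 1)) \<le> spec_norm chT"
    by (rule spec_ge) auto
  then show "1 \<le> spec_norm chT" unfolding chT_eval by (simp add: axis_def)
qed



definition slice :: "tensor3 \<Rightarrow> real^3 \<Rightarrow> real^3^3" where
  "slice A y = (\<chi> j k. \<Sum>i\<in>UNIV. y$i * A i j k)"

definition ONB :: "(3 \<Rightarrow> real^3) \<Rightarrow> bool" where
  "ONB b \<longleftrightarrow> (\<forall>l m. b l \<bullet> b m = (if l = m then 1 else 0)) \<and>
     (\<forall>i j. (\<Sum>l\<in>UNIV. b l $ i * b l $ j) = (if i = j then 1 else 0))"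

lemma ONB_col:
  assumes "orthogonal_matrix Q"
  shows "ONB (\<lambda>m. column m Q)"
proof -
  have 1: "transpose Q ** Q = mat 1" and 2: "Q ** transpose Q = mat 1"
    using assms by (auto simp: orthogonal_matrix_def)
  have a: "(\<Sum>i\<in>UNIV. Q$i$l * Q$i$m) = (if l = m then 1 else 0)" for l m
    using arg_cong[OF 1, of "\<lambda>M. M$l$m"] by (simp add: matrix_matrix_mult_def transpose_def mat_def)
  have b: "(\<Sum>l\<in>UNIV. Q$i$l * Q$j$l) = (if i = j then 1 else 0)" for i j
    using arg_cong[OF 2, of "\<lambda>M. M$i$j"] by (simp add: matrix_matrix_mult_def transpose_def mat_def)
  show ?thesis unfolding ONB_def
    by (simp add: column_def inner_vec_def a b)
qed

lemma ONB_id: "ONB (\<lambda>m. axis m 1)"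
proof -
  have "(\<lambda>m. column m (mat 1 :: real^3^3)) = (\<lambda>m. axis m 1)"
    by (auto simp: column_def mat_def axis_def vec_eq_iff)
  then show ?thesis using ONB_col[OF orthogonal_matrix_id] by simp
qed

definition rot :: "real \<Rightarrow> (3 \<Rightarrow> real^3) \<Rightarrow> 3 \<Rightarrow> real^3" where
  "rot t b l = (if l = 1 then b 1 else if l = 2 then cos t *\<^sub>R b 2 + sin t *\<^sub>R b 3
      else (- sin t) *\<^sub>R b 2 + cos t *\<^sub>R b 3)"

lemma rot_alg: "(c*p+s*q)*(c*p'+s*q') + ((-s)*p + c*q)*((-s)*p' + c*q') = (c^2+s^2)*(p*p'+q*q')"
  for c s p q p' q' :: real
  by algebra

lemma ONB_rot:
  assumes "ONB b"
  shows "ONB (rot t b)"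
proof -
  have inn: "\<And>l m. b l \<bullet> b m = (if l = m then 1 else 0)" and
       cpl: "\<And>i j. (\<Sum>l\<in>UNIV. b l $ i * b l $ j) = (if i = j then 1 else 0)"
    using assms unfolding ONB_def by auto
  have cs: "(cos t)^2 + (sin t)^2 = 1" by simp
  have I: "rot t b l \<bullet> rot t b m = (if l = m then 1 else 0)" for l m
    using exhaust_3[of l] exhaust_3[of m]
    by (elim disjE) (simp_all add: rot_def inner_add_left inner_add_right inn inner_commute
        power2_eq_square[symmetric] cs algebra_simps)
  have C: "(\<Sum>l\<in>UNIV. rot t b l $ i * rot t b l $ j) = (\<Sum>l\<in>UNIV. b l $ i * b l $ j)" for i j
    unfolding sum_3 rot_def
    using rot_alg[of "cos t" "b 2 $ i" "sin t" "b 3 $ i" "b 2 $ j" "b 3 $ j"] cs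
    by (simp add: algebra_simps)
  show ?thesis unfolding ONB_def using I C cpl by simp
qed

definition swp :: "(3 \<Rightarrow> real^3) \<Rightarrow> 3 \<Rightarrow> real^3" where
  "swp b l = (if l = 1 then b 2 else if l = 2 then b 1 else b 3)"

lemma ONB_swp:
  assumes "ONB b"
  shows "ONB (swp b)"
proof -
  have inn: "\<And>l m. b l \<bullet> b m = (if l = m then 1 else 0)" and
       cpl: "\<And>i j. (\<Sum>l\<in>UNIV. b l $ i * b l $ j) = (if i = j then 1 else 0)"
    using assms unfolding ONB_def by auto
  have I: "swp b l \<bullet> swp b m = (if l = m then 1 else 0)" for l m
    using exhaust_3[of l] exhaust_3[of m]
    by (elim disjE) (simp_all add: swp_def inn)
  have C: "(\<Sum>l\<in>UNIV. swp b l $ i * swp b l $ j) = (\<Sum>l\<in>UNIV. b l $ i * b l $ j)" for i j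
    unfolding sum_3 swp_def by simp
  show ?thesis unfolding ONB_def using I C cpl by simp
qed

lemma slice_entry: "slice A y $ j $ k = y$1 * A 1 j k + y$2 * A 2 j k + y$3 * A 3 j k"
  by (simp add: slice_def sum_3)

lemma det_slice_neg: "det (slice A (- y)) = - det (slice A y)"
  unfolding det_3 slice_entry by (simp add: algebra_simps)

lemma ivt_det: "\<exists>t. det (slice A (cos t *\<^sub>R u + sin t *\<^sub>R v)) = 0"
proof -
  define h where "h t = det (slice A (cos t *\<^sub>R u + sin t *\<^sub>R v))" for t
  have cont: "continuous_on {0..pi} h"
    unfolding h_def det_3 slice_entry by (intro continuous_intros) 
  have hpi: "h pi = - h 0" unfolding h_def using det_slice_neg[of A u] by simp
  show ?thesis
  proof (cases "h 0 \<le> 0")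
    case True
    then have "h 0 \<le> 0" "0 \<le> h pi" using hpi by auto
    from IVT'[OF this _ cont] show ?thesis unfolding h_def by auto
  next
    case False
    then have "h pi \<le> 0" "0 \<le> h 0" using hpi by auto
    from IVT2'[OF this _ cont] show ?thesis unfolding h_def by auto
  qed
qed

lemma kernel_unit:
  fixes M :: "real^3^3"
  assumes "det M = 0"
  shows "\<exists>b. norm b = 1 \<and> M *v b = 0"
proof -
  have "\<not> invertible M" using assms invertible_det_nz by blast
  then have "\<not> (\<forall>x. M *v x = 0 \<longrightarrow> x = 0)"
    using invertible_left_inverse matrix_left_invertible_ker by blast
  then obtain x where x: "M *v x = 0" "x \<noteq> 0" by blast
  then have "norm (x /\<^sub>R norm x) = 1" "M *v (x /\<^sub>R norm x) = 0"
    by (auto simp: matrix_vector_mult_scaleR)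
  then show ?thesis by blast
qed


lemma ifm: "a * (if P then 1 else 0) = (if P then a else (0::real))" "(if P then 1 else 0) * a = (if P then a else (0::real))"
  by simp_all

lemma ONB_recon_matrix:
  assumes "ONB b"
  shows "(\<Sum>m\<in>UNIV. (M *v b m)$j * b m $ k) = M$j$k"
proof -
  have cpl: "\<And>i j. (\<Sum>l\<in>UNIV. b l $ i * b l $ j) = (if i = j then 1 else 0)"
    using assms unfolding ONB_def by auto
  have "(\<Sum>m\<in>UNIV. (M *v b m)$j * b m $ k) = (\<Sum>m\<in>UNIV. \<Sum>k'\<in>UNIV. M$j$k' * (b m $ k' * b m $ k))"
    by (simp add: matrix_vector_mult_def sum_distrib_right mult.assoc)
  also have "\<dots> = (\<Sum>k'\<in>UNIV. M$j$k' * (\<Sum>m\<in>UNIV. b m $ k' * b m $ k))"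
    by (subst sum.swap) (simp add: sum_distrib_left)
  also have "\<dots> = M$j$k" by (simp add: cpl ifm)
  finally show ?thesis .
qed

lemma ONB_recon_slice:
  assumes "ONB x"
  shows "(\<Sum>l\<in>UNIV. x l $ i * slice A (x l) $ j $ k) = A i j k"
proof -
  have cpl: "\<And>i j. (\<Sum>l\<in>UNIV. x l $ i * x l $ j) = (if i = j then 1 else 0)"
    using assms unfolding ONB_def by auto
  have "(\<Sum>l\<in>UNIV. x l $ i * slice A (x l) $ j $ k) = (\<Sum>l\<in>UNIV. \<Sum>i'\<in>UNIV. (x l $ i * x l $ i') * A i' j k)"
    by (simp add: slice_def sum_distrib_left mult.assoc)
  also have "\<dots> = (\<Sum>i'\<in>UNIV. (\<Sum>l\<in>UNIV. x l $ i * x l $ i') * A i' j k)"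
    by (subst sum.swap) (simp add: sum_distrib_right)
  also have "\<dots> = A i j k" by (simp add: cpl ifm)
  finally show ?thesis .
qed

lemma column_axis: "column m Q = Q *v axis m (1::real)"
  by (simp add: column_def matrix_vector_mult_def axis_def vec_eq_iff if_distrib cong: if_cong)

lemma orth_rank_props: "orth_rank A \<le> 7 \<and> (\<exists>Y. decomp A (orth_rank A) Y)"
proof -
  obtain t where t: "det (slice A (cos t *\<^sub>R axis 2 1 + sin t *\<^sub>R axis 3 1)) = 0"
    using ivt_det by blast
  define b1 where "b1 = rot t (\<lambda>m. axis m 1)"
  have o1: "ONB b1" unfolding b1_def by (intro ONB_rot ONB_id)
  define b2 where "b2 = swp b1"
  have o2: "ONB b2" unfolding b2_def by (intro ONB_swp o1)
  have s1: "det (slice A (b2 1)) = 0" using t by (simp add: b2_def swp_def b1_def rot_def)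
  obtain s where s: "det (slice A (cos s *\<^sub>R b2 2 + sin s *\<^sub>R b2 3)) = 0"
    using ivt_det by blast
  define x where "x = rot s b2"
  have ox: "ONB x" unfolding x_def by (intro ONB_rot o2)
  have x1: "det (slice A (x 1)) = 0" using s1 by (simp add: x_def rot_def)
  have x2: "det (slice A (x 2)) = 0" using s by (simp add: x_def rot_def)
  obtain k1 where k1: "norm k1 = 1" "slice A (x 1) *v k1 = 0" using kernel_unit[OF x1] by blast
  obtain k2 where k2: "norm k2 = 1" "slice A (x 2) *v k2 = 0" using kernel_unit[OF x2] by blast
  obtain Q1 where Q1: "orthogonal_matrix Q1" "Q1 *v axis 3 1 = k1"
    using orthogonal_matrix_exists_basis[OF k1(1)] by blast
  obtain Q2 where Q2: "orthogonal_matrix Q2" "Q2 *v axis 3 1 = k2"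
    using orthogonal_matrix_exists_basis[OF k2(1)] by blast
  define bb where "bb l = (if l = 1 then (\<lambda>m. column m Q1) else if l = 2 then (\<lambda>m. column m Q2)
      else (\<lambda>m. axis m 1))" for l :: 3
  have obb: "ONB (bb l)" for l
    unfolding bb_def using ONB_col[OF Q1(1)] ONB_col[OF Q2(1)] ONB_id by auto
  have bb13: "bb 1 3 = k1" and bb23: "bb 2 3 = k2"
    using Q1(2) Q2(2) by (simp_all add: bb_def column_axis)
  define T where "T p = outer3 (x (fst p)) (slice A (x (fst p)) *v bb (fst p) (snd p)) (bb (fst p) (snd p))"
    for p :: "3 \<times> 3"
  have out: "\<forall>p\<in>UNIV. \<exists>x y z. T p = outer3 x y z" unfolding T_def by blast
  have orth: "\<forall>p\<in>UNIV. \<forall>q\<in>UNIV. p \<noteq> q \<longrightarrow> frob_inner (T p) (T q) = 0"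
  proof (intro ballI impI)
    fix p q :: "3 \<times> 3" assume "p \<noteq> q"
    then consider "fst p \<noteq> fst q" | "fst p = fst q" "snd p \<noteq> snd q" by (cases p, cases q) auto
    then show "frob_inner (T p) (T q) = 0"
    proof cases
      case 1
      then have "x (fst p) \<bullet> x (fst q) = 0" using ox unfolding ONB_def by simp
      then show ?thesis unfolding T_def frob_outer by simp
    next
      case 2
      then have "bb (fst p) (snd p) \<bullet> bb (fst q) (snd q) = 0" using obb[of "fst p"] unfolding ONB_def by simp
      then show ?thesis unfolding T_def frob_outer by simp
    qed
  qed
  have sum: "A = (\<lambda>i j k. \<Sum>p\<in>UNIV. T p i j k)"
  proof (intro ext)
    fix i j k
    have "(\<Sum>p\<in>UNIV. T p i j k) = (\<Sum>l\<in>UNIV. \<Sum>m\<in>UNIV. T (l, m) i j k)"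
      by (simp add: sum.cartesian_product' UNIV_Times_UNIV[symmetric] del: UNIV_Times_UNIV)
    also have "\<dots> = (\<Sum>l\<in>UNIV. x l $ i * (\<Sum>m\<in>UNIV. (slice A (x l) *v bb l m) $ j * bb l m $ k))"
      by (simp add: T_def outer3_def sum_distrib_left mult.assoc)
    also have "\<dots> = (\<Sum>l\<in>UNIV. x l $ i * slice A (x l) $ j $ k)"
      by (intro sum.cong refl) (simp add: ONB_recon_matrix[OF obb])
    also have "\<dots> = A i j k" using ONB_recon_slice[OF ox] .
    finally show "A i j k = (\<Sum>p\<in>UNIV. T p i j k)" ..
  qed
  obtain Y where Y: "decomp A (card {p\<in>UNIV. T p \<noteq> (\<lambda>i j k. 0)}) Y"
    using decomp_from_family[OF _ out orth sum] by auto
  have z: "T (1,3) = (\<lambda>i j k. 0)" "T (2,3) = (\<lambda>i j k. 0)"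
    using k1(2) k2(2) by (simp_all add: T_def bb13 bb23 outer3_def)
  have "{p\<in>UNIV. T p \<noteq> (\<lambda>i j k. 0)} \<subseteq> UNIV - {(1,3),(2,3)}" using z by auto
  then have "card {p\<in>UNIV. T p \<noteq> (\<lambda>i j k. 0)} \<le> card (UNIV - {(1::3,3::3),(2,3)})"
    by (intro card_mono) auto
  also have "\<dots> = 7" by (simp add: card_Diff_subset)
  finally have "orth_rank A \<le> 7" using orth_rank_le[OF Y] by simp
  then show ?thesis using orth_rank_decomp[OF Y] by blast
qed


lemma frob_pos: "A \<noteq> (\<lambda>i j k. 0) \<Longrightarrow> frob_norm A > 0"
proof -
  assume nz: "A \<noteq> (\<lambda>i j k. 0)"
  have "frob_inner A A \<noteq> 0"
  proof
    assume "frob_inner A A = 0"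
    then have "\<forall>p\<in>UNIV. A (fst p) (fst (snd p)) (snd (snd p)) * A (fst p) (fst (snd p)) (snd (snd p)) = 0"
      unfolding frob_prod by (subst (asm) sum_nonneg_eq_0_iff) auto
    then have "A i j k = 0" for i j k by (drule_tac x="(i,j,k)" in bspec) auto
    then show False using nz by (auto simp: fun_eq_iff)
  qed
  then have "frob_inner A A > 0" using frob_self_nonneg[of A] by linarith
  then show ?thesis by (simp add: frob_norm_def)
qed

lemma ratio_lower:
  assumes "A \<noteq> (\<lambda>i j k. 0)"
  shows "1 / sqrt 7 \<le> spec_norm A / frob_norm A"
proof -
  obtain Y where Y: "decomp A (orth_rank A) Y" and r7: "orth_rank A \<le> 7"
    using orth_rank_props by blast
  have f: "frob_norm A > 0" using frob_pos[OF assms] .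
  have b: "frob_norm A \<le> sqrt (real (orth_rank A)) * spec_norm A" by (rule decomp_bound[OF Y])
  then have "0 < sqrt (real (orth_rank A)) * spec_norm A" using f by linarith
  then have sp: "spec_norm A > 0" by (simp add: zero_less_mult_iff)
  have "sqrt (real (orth_rank A)) \<le> sqrt 7" using r7 by simp
  then have "frob_norm A \<le> sqrt 7 * spec_norm A" using b sp
    by (meson mult_right_mono less_imp_le order_trans)
  then show ?thesis using f by (simp add: field_simps)
qed

lemma chT_fnorm: "frob_norm chT = sqrt 7" by (simp add: frob_norm_def chT_frob)

lemma chT_ratio: "spec_norm chT / frob_norm chT = 1 / sqrt 7"
  by (simp add: chT_spec chT_fnorm)

lemma approx_V: "chT \<in> V \<Longrightarrow> approx_ratio V = 1 / sqrt 7"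
  unfolding approx_ratio_def
  by (rule cInf_eq_minimum) (use chT_ratio chT_nz ratio_lower in \<open>auto, metis\<close>)

lemma orth_rank_chT: "orth_rank chT = 7"
proof -
  obtain Y where Y: "decomp chT (orth_rank chT) Y" and r7: "orth_rank chT \<le> 7"
    using orth_rank_props by blast
  have "sqrt 7 \<le> sqrt (real (orth_rank chT))"
    using decomp_bound[OF Y] by (simp add: chT_spec chT_fnorm)
  then have "7 \<le> real (orth_rank chT)" by simp
  then show ?thesis using r7 by linarith
qed

lemma max_orth: "Max (range orth_rank) = 7"
proof (rule Max_eqI)
  show "finite (range orth_rank)"
    by (rule finite_subset[of _ "{..7}"]) (use orth_rank_props in auto)
  show "y \<le> 7" if "y \<in> range orth_rank" for y using that orth_rank_props by auto
  show "7 \<in> range orth_rank" using orth_rank_chT by (metis rangeI)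
qed

theorem corollary1p5:
  shows "approx_ratio UNIV = approx_ratio sym_tensors
       \<and> approx_ratio sym_tensors = 1 / sqrt (real (Max (range orth_rank)))
       \<and> 1 / sqrt (real (Max (range orth_rank))) = 1 / sqrt 7
       \<and> extremal_in UNIV (assoc_sym_tensor chebyshev33)
       \<and> extremal_in sym_tensors (assoc_sym_tensor chebyshev33)"
  using approx_V[of UNIV] approx_V[of sym_tensors] chT_sym max_orth chT_nz chT_ratio
  by (simp add: extremal_in_def chT_assoc)

end
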